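(* For $2\le k\le n$, let $\mathcal{A}^{1\prec n}_{k\mapsto n}$ be the set of permutations $\sigma$ of $\{1,\dots,n\}$ avoiding $1423$ and $2413$ such that entry $1$ appears to the left of entry $n$ and $\sigma(k)=n$, and let $a_{n,k}=\lvert\mathcal{A}^{1\prec n}_{k\mapsto n}\rvert$. Then \begin{align*} a_{n,2}&=1,\\ a_{n,n}&=a_{n,n-1}+a_{n-1,n-1}\quad\text{for } n\ge3,\\ a_{n,k}&=a_{n,k-1}+a_{n-1,k}+a_{n-1,k-1}\quad\text{for }3\le k<n. \end{align*}
   Context: A permutation avoids a pattern $p$ if no subsequence of its one-line notation is order-isomorphic to $p$. *)

theory Defs
  imports Main
begin

definition perms_of :: "nat \<Rightarrow> nat list set" where
  "perms_of n = {xs. distinct xs \<and> set xs = {1..n}}"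

definition contains_pattern :: "nat list \<Rightarrow> nat list \<Rightarrow> bool" where
  "contains_pattern xs p \<longleftrightarrow>
     (\<exists>f :: nat \<Rightarrow> nat. strict_mono_on {..<length p} f \<and>
        (\<forall>a<length p. f a < length xs) \<and>
        (\<forall>a<length p. \<forall>b<length p. xs ! f a < xs ! f b \<longleftrightarrow> p ! a < p ! b))"

definition avoids :: "nat list \<Rightarrow> nat list \<Rightarrow> bool" where
  "avoids xs p \<longleftrightarrow> \<not> contains_pattern xs p"

text \<open>Positions are 1-based as in the paper: sigma(k) = xs ! (k - 1).
  "1 appears left of n": index of 1 < index of n.\<close>
definition A_set :: "nat \<Rightarrow> nat \<Rightarrow> nat list set" where
  "A_set n k = {xs \<in> perms_of n. avoids xs [1,4,2,3] \<and> avoids xs [2,4,1,3] \<and>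
       (\<exists>i j. i < j \<and> j < length xs \<and> xs ! i = 1 \<and> xs ! j = n) \<and>
       xs ! (k - 1) = n}"

definition a_num :: "nat \<Rightarrow> nat \<Rightarrow> nat" where
  "a_num n k = card (A_set n k)"

end

theory Submission
  imports Defs
begin

definition good :: "nat list \<Rightarrow> bool" where
  "good xs \<longleftrightarrow> \<not>(\<exists>i j l q. i<j \<and> j<l \<and> l<q \<and> q<length xs \<and>
      xs!i < xs!q \<and> xs!l < xs!q \<and> xs!q < xs!j)"

lemma contains_bad:
  assumes "contains_pattern xs p" and "p = [1,4,2,3] \<or> p = [2,4,1,3]"
  shows "\<not> good xs"
proof -
  from assms(1) obtain f where sm: "strict_mono_on {..<length p} f"
    and lt: "\<forall>a<length p. f a < length xs"
    and ord: "\<forall>a<length p. \<forall>b<length p. xs ! f a < xs ! f b \<longleftrightarrow> p ! a < p ! b"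
    unfolding contains_pattern_def by blast
  have lp: "length p = 4" using assms(2) by auto
  have m01: "f 0 < f 1" and m12: "f 1 < f 2" and m23: "f 2 < f 3"
    using sm lp by (auto simp: strict_mono_on_def)
  have l3: "f 3 < length xs" using lt lp by auto
  have c1: "xs ! f 0 < xs ! f 3" using ord lp assms(2) by (elim disjE) (auto dest!: spec[of _ 0] dest: spec[of _ 3])
  have c2: "xs ! f 2 < xs ! f 3" using ord lp assms(2) by (elim disjE) (auto dest!: spec[of _ 2] dest: spec[of _ 3])
  have c3: "xs ! f 3 < xs ! f 1" using ord lp assms(2) by (elim disjE) (auto dest!: spec[of _ 3] dest: spec[of _ 1])
  show ?thesis unfolding good_def using m01 m12 m23 l3 c1 c2 c3 by blast
qed

lemma bad_contains:
  assumes "distinct xs" "i<j" "j<l" "l<q" "q<length xs" "xs!i < xs!q" "xs!l < xs!q" "xs!q < xs!j"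
  shows "contains_pattern xs [1,4,2,3] \<or> contains_pattern xs [2,4,1,3]"
proof -
  define f where "f = (\<lambda>a::nat. [i,j,l,q] ! a)"
  have sm: "strict_mono_on {..<4} f"
    unfolding strict_mono_on_def f_def using assms
    by (auto simp: less_Suc_eq numeral_eq_Suc)
  have lt: "\<forall>a<4. f a < length xs" unfolding f_def using assms
    by (auto simp: less_Suc_eq numeral_eq_Suc)
  have ne: "xs!i \<noteq> xs!l" using assms(1) assms(2-5) by (simp add: nth_eq_iff_index_eq)
  show ?thesis
  proof (cases "xs!i < xs!l")
    case True
    have "\<forall>a<4. \<forall>b<4. xs ! f a < xs ! f b \<longleftrightarrow> [1::nat,4,2,3] ! a < [1,4,2,3] ! b"
      unfolding f_def using assms True by (auto simp: less_Suc_eq numeral_eq_Suc)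
    then have "contains_pattern xs [1,4,2,3]" unfolding contains_pattern_def using sm lt
      by (intro exI[of _ f]) (simp add: numeral_eq_Suc)
    then show ?thesis by blast
  next
    case False
    then have F: "xs!l < xs!i" using ne by simp
    have "\<forall>a<4. \<forall>b<4. xs ! f a < xs ! f b \<longleftrightarrow> [2::nat,4,1,3] ! a < [2,4,1,3] ! b"
      unfolding f_def using assms F by (auto simp: less_Suc_eq numeral_eq_Suc)
    then have "contains_pattern xs [2,4,1,3]" unfolding contains_pattern_def using sm lt
      by (intro exI[of _ f]) (simp add: numeral_eq_Suc)
    then show ?thesis by blast
  qed
qed

lemma avoids_iff_good:
  assumes "distinct xs"
  shows "(avoids xs [1,4,2,3] \<and> avoids xs [2,4,1,3]) \<longleftrightarrow> good xs"
proof
  assume "avoids xs [1,4,2,3] \<and> avoids xs [2,4,1,3]"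
  then show "good xs" using bad_contains[OF assms] unfolding avoids_def good_def by blast
next
  assume "good xs"
  then show "avoids xs [1,4,2,3] \<and> avoids xs [2,4,1,3]"
    using contains_bad unfolding avoids_def by blast
qed

definition straddle :: "nat list \<Rightarrow> nat \<Rightarrow> bool" where
  "straddle xs g \<longleftrightarrow> (\<exists>i j l. i<j \<and> j<l \<and> l<length xs \<and> xs!i < g \<and> xs!l < g \<and> g < xs!j)"

definition PP :: "nat \<Rightarrow> nat \<Rightarrow> nat list set" where
  "PP N m = {P. length P = m \<and> distinct P \<and> set P \<subseteq> {1..N} \<and> 1 \<in> set P \<and> good P \<and>
      (\<forall>g\<in>{1..N}. g \<notin> set P \<longrightarrow> \<not> straddle P g)}"

definition gl :: "nat \<Rightarrow> nat list \<Rightarrow> nat list" where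
  "gl n P = rev (sorted_list_of_set ({1..n-1} - set P))"

lemma gl_props:
  shows "sorted_wrt (>) (gl n P)" "set (gl n P) = {1..n-1} - set P" "distinct (gl n P)"
  unfolding gl_def by (auto simp: sorted_wrt_rev strict_sorted_list_of_set)

lemma A_decomp:
  assumes "xs \<in> A_set n k" "1 \<le> k" "k \<le> n"
  shows "xs = take (k-1) xs @ [n] @ gl n (take (k-1) xs)"
    and "take (k-1) xs \<in> PP (n-1) (k-1)"
proof -
  have dxs: "distinct xs" and sxs: "set xs = {1..n}"
    and avo: "avoids xs [1,4,2,3] \<and> avoids xs [2,4,1,3]"
    and ex: "\<exists>i j. i < j \<and> j < length xs \<and> xs ! i = 1 \<and> xs ! j = n"
    and nk: "xs ! (k-1) = n"
    using assms(1) unfolding A_set_def perms_of_def by auto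
  have gxs: "good xs" using avo avoids_iff_good[OF dxs] by simp
  have len: "length xs = n" using distinct_card[OF dxs] sxs by simp
  from ex obtain i j where ij: "i < j" "j < length xs" "xs ! i = 1" "xs ! j = n" by blast
  have jk: "j = k-1"
    using dxs ij nk assms len nth_eq_iff_index_eq[OF dxs, of j "k-1"] by auto
  define P where "P = take (k-1) xs"
  define D where "D = drop k xs"
  have xs_eq: "xs = P @ [n] @ D"
    unfolding P_def D_def using id_take_nth_drop[of "k-1" xs] assms len nk
    by (simp add: Suc_diff_le)
  have lenP: "length P = k-1" unfolding P_def using assms len by simp
  have posv: "\<And>x. x \<in> set xs \<Longrightarrow> 1 \<le> x \<and> x \<le> n" using sxs by auto
  have nthD: "\<And>a. a < length D \<Longrightarrow> xs ! (k + a) = D ! a"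
    unfolding D_def using assms len by simp
  have Ddec: "sorted_wrt (>) D"
  proof (unfold sorted_wrt_iff_nth_less, intro allI impI)
    fix a b assume ab: "a < b" "b < length D"
    have kb: "k + b < length xs" using ab unfolding D_def by simp
    have ne: "D ! a \<noteq> D ! b" using ab dxs unfolding D_def by (simp add: nth_eq_iff_index_eq)
    show "D ! a > D ! b"
    proof (rule ccontr)
      assume "\<not> D ! a > D ! b"
      then have lt: "D ! a < D ! b" using ne by simp
      have il: "i < length xs" using ij by simp
      have k1l: "k - 1 < length xs" using assms len by simp
      have "i \<noteq> k + b" using ij jk by simp
      then have b1: "xs ! (k+b) \<noteq> 1"
        using nth_eq_iff_index_eq[OF dxs il kb] ij(3) by simp
      have "k - 1 \<noteq> k + b" using assms(2) by arith
      then have b2: "xs ! (k+b) \<noteq> n"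
        using nth_eq_iff_index_eq[OF dxs k1l kb] nk by simp
      have "1 \<le> xs!(k+b) \<and> xs!(k+b) \<le> n" using posv kb by auto
      then have "xs ! i < xs ! (k+b)" "xs ! (k+a) < xs ! (k+b)" "xs ! (k+b) < xs ! j"
        using b1 b2 ij lt nthD ab by auto
      moreover have "i < k-1" "k - 1 < k + a" "k+a < k+b" using ij jk ab by auto
      ultimately show False using gxs kb jk unfolding good_def by blast
    qed
  qed
  have setD: "set D = {1..n-1} - set P"
  proof -
    have "set xs = set P \<union> {n} \<union> set D" using xs_eq by auto
    moreover have "distinct (P @ [n] @ D)" using dxs xs_eq by simp
    ultimately have U: "{1..n} = set P \<union> {n} \<union> set D" and dd: "distinct (P @ [n] @ D)"
      using sxs by auto
    show ?thesis
    proof (intro set_eqI iffI)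
      fix x assume x: "x \<in> set D"
      then have "x \<in> {1..n}" "x \<noteq> n" "x \<notin> set P" using U dd by auto
      then show "x \<in> {1..n-1} - set P" by auto
    next
      fix x assume x: "x \<in> {1..n-1} - set P"
      then have "x \<in> {1..n}" "x \<noteq> n" "x \<notin> set P" by auto
      then show "x \<in> set D" using U by blast
    qed
  qed
  have "D = gl n P"
  proof -
    have "rev D = sorted_list_of_set ({1..n-1} - set P)"
      using strict_sorted_equal[of "sorted_list_of_set ({1..n-1} - set P)" "rev D"]
        Ddec setD by (simp add: sorted_wrt_rev strict_sorted_list_of_set)
    then show ?thesis unfolding gl_def by (metis rev_rev_ident)
  qed
  then show "xs = take (k-1) xs @ [n] @ gl n (take (k-1) xs)"
    unfolding P_def[symmetric] using xs_eq by simp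
  have nthP: "\<And>a. a < length P \<Longrightarrow> xs ! a = P ! a" unfolding P_def by simp
  have setxs: "set xs = set P \<union> {n} \<union> set D" by (subst xs_eq) auto
  have dd: "distinct (P @ [n] @ D)" using dxs xs_eq by simp
  show "take (k-1) xs \<in> PP (n-1) (k-1)"
    unfolding P_def[symmetric] PP_def
  proof (intro CollectI conjI ballI impI)
    show "length P = k-1" by (fact lenP)
    show "distinct P" using dxs unfolding P_def by simp
    show "set P \<subseteq> {1..n-1}"
    proof
      fix x assume x: "x \<in> set P"
      have "x \<in> set xs" using x setxs by blast
      then have "1 \<le> x" "x \<le> n" using posv by auto
      moreover have "x \<noteq> n" using x dd by auto
      ultimately show "x \<in> {1..n-1}" by auto
    qed
    show "1 \<in> set P"
    proof -
      have ik: "i < k-1" using ij jk by simp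
      then have "i < length P" using lenP by simp
      moreover have "P ! i = 1" using nthP[OF \<open>i < length P\<close>] ij by simp
      ultimately show ?thesis by (metis nth_mem)
    qed
    show "good P" unfolding good_def
    proof
      assume "\<exists>a b c d. a<b \<and> b<c \<and> c<d \<and> d<length P \<and> P!a < P!d \<and> P!c < P!d \<and> P!d < P!b"
      then obtain a b c d where abcd: "a<b" "b<c" "c<d" "d<length P" "P!a < P!d" "P!c < P!d" "P!d < P!b"
        by blast
      have "xs!a = P!a" "xs!b = P!b" "xs!c = P!c" "xs!d = P!d"
        using abcd nthP by simp_all
      moreover have "d < length xs" using abcd lenP len assms by simp
      ultimately have "a<b \<and> b<c \<and> c<d \<and> d<length xs \<and> xs!a < xs!d \<and> xs!c < xs!d \<and> xs!d < xs!b"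
        using abcd by simp
      then show False using gxs unfolding good_def by blast
    qed
  next
    fix g assume g: "g \<in> {1..n-1}" "g \<notin> set P"
    then have "g \<in> set D" using setD by simp
    then obtain q where q: "q < length D" "D ! q = g" by (auto simp: in_set_conv_nth)
    show "\<not> straddle P g"
    proof
      assume "straddle P g"
      then obtain a b c where abc: "a<b" "b<c" "c<length P" "P!a < g" "P!c < g" "g < P!b"
        unfolding straddle_def by blast
      have "xs ! a = P ! a" "xs ! b = P ! b" "xs ! c = P ! c"
        using abc nthP by simp_all
      moreover have "xs ! (k + q) = g" using nthD q by simp
      moreover have "c < k + q" "k + q < length xs" using abc lenP q assms len unfolding D_def by auto
      ultimately have "a<b \<and> b<c \<and> c<k+q \<and> k+q<length xs \<and> xs!a < xs!(k+q) \<and> xs!c < xs!(k+q) \<and> xs!(k+q) < xs!b"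
        using abc by simp
      then show False using gxs unfolding good_def by blast
    qed
  qed
qed


lemma A_build:
  assumes "P \<in> PP (n-1) (k-1)" "1 \<le> k" "k \<le> n"
  shows "P @ [n] @ gl n P \<in> A_set n k"
proof -
  define D where "D = gl n P"
  define xs where "xs = P @ [n] @ D"
  have lenP: "length P = k-1" and dP: "distinct P" and sP: "set P \<subseteq> {1..n-1}"
    and oneP: "1 \<in> set P" and gP: "good P"
    and gapP: "\<And>g. g \<in> {1..n-1} \<Longrightarrow> g \<notin> set P \<Longrightarrow> \<not> straddle P g"
    using assms(1) unfolding PP_def by auto
  have Ddec: "sorted_wrt (>) D" and sD: "set D = {1..n-1} - set P" and dD: "distinct D"
    using gl_props unfolding D_def by auto
  have nP: "n \<notin> set P" using sP assms by auto
  have nD: "n \<notin> set D" using sD by auto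
  have dxs: "distinct xs" unfolding xs_def using dP dD nP nD sD by auto
  have sxs: "set xs = {1..n}"
  proof -
    have "set xs = set P \<union> {n} \<union> ({1..n-1} - set P)" unfolding xs_def using sD by auto
    also have "\<dots> = {1..n-1} \<union> {n}" using sP by auto
    also have "\<dots> = {1..n}" using assms by auto
    finally show ?thesis .
  qed
  have len: "length xs = n" using distinct_card[OF dxs] sxs by simp
  have nthP: "\<And>a. a < k-1 \<Longrightarrow> xs ! a = P ! a" unfolding xs_def using lenP by (simp add: nth_append)
  have nthk: "xs ! (k-1) = n" unfolding xs_def using lenP by (simp add: nth_append)
  have nthD: "xs ! a = D ! (a - k)" if ak: "k \<le> a" for a
  proof -
    have "\<not> a < length P" using lenP ak by simp
    then have "xs ! a = (n # D) ! (a - (k-1))" unfolding xs_def using lenP by (simp add: nth_append)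
    moreover have "a - (k-1) = Suc (a - k)" using ak assms by simp
    ultimately show ?thesis by simp
  qed
  have lenD: "length xs = k + length D" unfolding xs_def using lenP assms by simp
  have bnd: "\<And>a. a < length xs \<Longrightarrow> xs ! a \<le> n" using sxs by (metis atLeastAtMost_iff nth_mem)
  have gxs: "good xs"
    unfolding good_def
  proof
    assume "\<exists>i j l q. i<j \<and> j<l \<and> l<q \<and> q<length xs \<and> xs!i < xs!q \<and> xs!l < xs!q \<and> xs!q < xs!j"
    then obtain i j l q where Q: "i<j" "j<l" "l<q" "q<length xs" "xs!i < xs!q" "xs!l < xs!q" "xs!q < xs!j"
      by blast
    consider "q < k-1" | "q = k-1" | "k \<le> q" by linarith
    then show False
    proof cases
      case 1
      then have "P!i < P!q" "P!l < P!q" "P!q < P!j" using Q nthP by auto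
      moreover have "q < length P" using 1 lenP by simp
      ultimately show False using gP Q unfolding good_def by blast
    next
      case 2
      then show False using Q nthk bnd[of j] by auto
    next
      case 3
      define d where "d = D ! (q - k)"
      have qd: "xs ! q = d" unfolding d_def using nthD 3 by simp
      have dmem: "d \<in> set D" unfolding d_def using 3 Q lenD by simp
      consider "l < k-1" | "l = k-1" | "k \<le> l" by linarith
      then show False
      proof cases
        case 1
        have "straddle P d" unfolding straddle_def
          using Q 1 nthP qd lenP by (intro exI[of _ i] exI[of _ j] exI[of _ l]) auto
        then show False using gapP dmem sD by auto
      next
        case 2
        then show False using Q nthk qd bnd[of q] by auto
      next
        case 3
        have "D ! (q-k) < D ! (l-k)"
          using sorted_wrt_nth_less[OF Ddec, of "l-k" "q-k"] 3 Q lenD by simp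
        then show False using Q nthD 3 \<open>k \<le> q\<close> by simp
      qed
    qed
  qed
  have "xs \<in> A_set n k"
    unfolding A_set_def perms_of_def
  proof (intro CollectI conjI)
    show "distinct xs" "set xs = {1..n}" by (fact dxs, fact sxs)
    show "avoids xs [1,4,2,3]" "avoids xs [2,4,1,3]" using gxs avoids_iff_good[OF dxs] by auto
    show "xs ! (k-1) = n" by (fact nthk)
    obtain i where i: "i < length P" "P ! i = 1" using oneP by (metis in_set_conv_nth)
    show "\<exists>i j. i < j \<and> j < length xs \<and> xs ! i = 1 \<and> xs ! j = n"
      using i nthP lenP nthk len assms by (intro exI[of _ i] exI[of _ "k-1"]) auto
  qed
  then show ?thesis unfolding xs_def D_def .
qed

lemma a_num_PP:
  assumes "1 \<le> k" "k \<le> n"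
  shows "a_num n k = card (PP (n-1) (k-1))"
proof -
  have "bij_betw (take (k-1)) (A_set n k) (PP (n-1) (k-1))"
  proof (rule bij_betw_imageI)
    show "inj_on (take (k-1)) (A_set n k)"
    proof
      fix x y assume "x \<in> A_set n k" "y \<in> A_set n k" "take (k-1) x = take (k-1) y"
      then show "x = y" using A_decomp(1)[OF _ assms] by metis
    qed
    show "take (k-1) ` A_set n k = PP (n-1) (k-1)"
    proof
      show "take (k-1) ` A_set n k \<subseteq> PP (n-1) (k-1)" using A_decomp(2)[OF _ assms] by blast
      show "PP (n-1) (k-1) \<subseteq> take (k-1) ` A_set n k"
      proof
        fix P assume P: "P \<in> PP (n-1) (k-1)"
        then have "length P = k-1" unfolding PP_def by simp
        then have "P = take (k-1) (P @ [n] @ gl n P)" by simp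
        then show "P \<in> take (k-1) ` A_set n k" using A_build[OF P assms] by blast
      qed
    qed
  qed
  then show ?thesis unfolding a_num_def by (rule bij_betw_same_card)
qed

lemma straddle_take: assumes "straddle (take n xs) g" shows "straddle xs g"
proof -
  obtain i j l where Q: "i<j" "j<l" "l<length (take n xs)" "(take n xs)!i < g"
     "(take n xs)!l < g" "g < (take n xs)!j"
    using assms unfolding straddle_def by blast
  have "l < n" "l < length xs" using Q(3) by simp_all
  then have "xs!i < g" "xs!l < g" "g < xs!j" using Q by simp_all
  then show ?thesis unfolding straddle_def using Q(1,2) \<open>l < length xs\<close> by blast
qed

lemma good_take: assumes "good xs" shows "good (take n xs)"
  unfolding good_def
proof
  assume "\<exists>i j l q. i<j \<and> j<l \<and> l<q \<and> q<length (take n xs) \<and> (take n xs)!i < (take n xs)!q \<and>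
       (take n xs)!l < (take n xs)!q \<and> (take n xs)!q < (take n xs)!j"
  then obtain i j l q where Q: "i<j" "j<l" "l<q" "q<length (take n xs)" "(take n xs)!i < (take n xs)!q"
       "(take n xs)!l < (take n xs)!q" "(take n xs)!q < (take n xs)!j" by blast
  have "q < n" "q < length xs" using Q(4) by simp_all
  then have "xs!i < xs!q" "xs!l < xs!q" "xs!q < xs!j" using Q by simp_all
  then show False using assms Q(1-3) \<open>q < length xs\<close> unfolding good_def by blast
qed

lemma good_snoc: "good (xs @ [y]) \<longleftrightarrow> good xs \<and> \<not> straddle xs y"
proof
  assume g: "good (xs @ [y])"
  have "good xs" using good_take[OF g, of "length xs"] by simp
  moreover have "\<not> straddle xs y"
  proof
    assume "straddle xs y"
    then obtain i j l where Q: "i<j" "j<l" "l<length xs" "xs!i < y" "xs!l < y" "y < xs!j"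
      unfolding straddle_def by blast
    then have "(xs@[y])!i < (xs@[y])!(length xs) \<and> (xs@[y])!l < (xs@[y])!(length xs) \<and>
        (xs@[y])!(length xs) < (xs@[y])!j" by (simp add: nth_append)
    moreover have "length xs < length (xs@[y])" by simp
    ultimately show False using g Q unfolding good_def by blast
  qed
  ultimately show "good xs \<and> \<not> straddle xs y" by simp
next
  assume a: "good xs \<and> \<not> straddle xs y"
  show "good (xs @ [y])" unfolding good_def
  proof
    assume "\<exists>i j l q. i<j \<and> j<l \<and> l<q \<and> q<length (xs@[y]) \<and> (xs@[y])!i < (xs@[y])!q \<and>
       (xs@[y])!l < (xs@[y])!q \<and> (xs@[y])!q < (xs@[y])!j"
    then obtain i j l q where Q: "i<j" "j<l" "l<q" "q<length (xs@[y])" "(xs@[y])!i < (xs@[y])!q"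
       "(xs@[y])!l < (xs@[y])!q" "(xs@[y])!q < (xs@[y])!j" by blast
    show False
    proof (cases "q = length xs")
      case True
      then have "xs!i < y" "xs!l < y" "y < xs!j" using Q by (auto simp: nth_append)
      moreover have "l < length xs" using Q True by simp
      ultimately show False using a Q unfolding straddle_def by blast
    next
      case False
      then have q: "q < length xs" using Q by simp
      then have "xs!i < xs!q" "xs!l < xs!q" "xs!q < xs!j" using Q by (auto simp: nth_append)
      then show False using a Q q unfolding good_def by blast
    qed
  qed
qed

lemma straddle_snoc_big: "g \<le> y \<Longrightarrow> straddle (xs @ [y]) g \<longleftrightarrow> straddle xs g"
proof
  assume gy: "g \<le> y" and s: "straddle (xs @ [y]) g"
  then obtain i j l where Q: "i<j" "j<l" "l<length (xs@[y])" "(xs@[y])!i < g" "(xs@[y])!l < g" "g < (xs@[y])!j"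
    unfolding straddle_def by blast
  have "l \<noteq> length xs" using Q gy by (auto simp: nth_append)
  then have l: "l < length xs" using Q by simp
  then show "straddle xs g" using Q unfolding straddle_def by (auto simp: nth_append)
next
  assume "straddle xs g"
  then show "straddle (xs @ [y]) g" using straddle_take[of "length xs" "xs@[y]"] by simp
qed

lemma finite_PP: "finite (PP N m)"
proof -
  have "PP N m \<subseteq> {xs. set xs \<subseteq> {1..N} \<and> length xs = m}" unfolding PP_def by auto
  moreover have "finite {xs. set xs \<subseteq> {1..N} \<and> length xs = m}"
    by (rule finite_lists_length_eq) simp
  ultimately show ?thesis by (rule finite_subset)
qed

lemma PP_len_le: "P \<in> PP N m \<Longrightarrow> m \<le> N"
proof -
  assume P: "P \<in> PP N m"
  then have "card (set P) = m" "set P \<subseteq> {1..N}" unfolding PP_def by (auto simp: distinct_card)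
  then show "m \<le> N" by (metis card_atLeastAtMost card_mono diff_Suc_1 finite_atLeastAtMost)
qed

lemma PP_empty: "N < m \<Longrightarrow> PP N m = {}"
  using PP_len_le by force

lemma PP_one: "1 \<le> N \<Longrightarrow> PP N 1 = {[1]}"
proof
  assume N: "1 \<le> N"
  show "PP N 1 \<subseteq> {[1]}"
  proof
    fix P assume "P \<in> PP N 1"
    then have "length P = 1" "1 \<in> set P" unfolding PP_def by auto
    then show "P \<in> {[1]}" by (cases P) auto
  qed
  have "good [1]" unfolding good_def by auto
  moreover have "\<not> straddle [1] g" for g unfolding straddle_def by auto
  ultimately show "{[1]} \<subseteq> PP N 1" using N unfolding PP_def by auto
qed

lemma PP_zero: "PP N 0 = {}"
  unfolding PP_def by auto

definition HH :: "nat \<Rightarrow> nat \<Rightarrow> nat list set" where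
  "HH N m = {P \<in> PP N m. \<exists>i j. i<j \<and> j<length P \<and> P!i = 1 \<and> P!j = N}"

definition GG :: "nat \<Rightarrow> nat \<Rightarrow> nat list set" where
  "GG N m = {P \<in> PP N m. \<exists>i j. j<i \<and> i<length P \<and> P!i = 1 \<and> P!j = N}"

lemma PP_lower:
  assumes "P \<in> PP (N-1) m" "1 \<le> N" shows "P \<in> PP N m"
proof -
  have A: "length P = m" "distinct P" "set P \<subseteq> {1..N-1}" "1 \<in> set P" "good P"
    "\<And>g. g\<in>{1..N-1} \<Longrightarrow> g \<notin> set P \<Longrightarrow> \<not> straddle P g"
    using assms(1) unfolding PP_def by auto
  have "{1..N-1} \<subseteq> {1..N}" by auto
  then have "set P \<subseteq> {1..N}" using A(3) by blast
  moreover have "\<not> straddle P g" if "g\<in>{1..N}" "g \<notin> set P" for g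
  proof (cases "g = N")
    case True
    show ?thesis
    proof
      assume "straddle P g"
      then obtain j where "j < length P" "g < P!j" unfolding straddle_def by (meson order.strict_trans)
      then have "P!j \<in> set P" "N < P!j" using True by auto
      then show False using A(3) by auto
    qed
  next
    case False
    then show ?thesis using A(6) that by auto
  qed
  ultimately show ?thesis using A unfolding PP_def by (simp only: mem_Collect_eq) blast
qed

lemma PP_upper:
  assumes "P \<in> PP N m" "N \<notin> set P" shows "P \<in> PP (N-1) m"
proof -
  have A: "length P = m" "distinct P" "set P \<subseteq> {1..N}" "1 \<in> set P" "good P"
    "\<And>g. g\<in>{1..N} \<Longrightarrow> g \<notin> set P \<Longrightarrow> \<not> straddle P g"
    using assms(1) unfolding PP_def by auto
  have "set P \<subseteq> {1..N-1}"
  proof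
    fix x assume x: "x \<in> set P"
    then have "1 \<le> x" "x \<le> N" "x \<noteq> N" using A(3) assms(2) by auto
    then show "x \<in> {1..N-1}" by simp
  qed
  moreover have "\<forall>g\<in>{1..N-1}. g \<notin> set P \<longrightarrow> \<not> straddle P g" using A(6) by auto
  ultimately show ?thesis using A(1,2,4,5) unfolding PP_def by blast
qed

lemma PP_split:
  assumes "2 \<le> N"
  shows "card (PP N m) = card (PP (N-1) m) + card (HH N m) + card (GG N m)"
proof -
  have eq: "PP N m = (PP (N-1) m \<union> HH N m) \<union> GG N m"
  proof
    show "PP N m \<subseteq> (PP (N-1) m \<union> HH N m) \<union> GG N m"
    proof
      fix P assume P: "P \<in> PP N m"
      show "P \<in> (PP (N-1) m \<union> HH N m) \<union> GG N m"
      proof (cases "N \<in> set P")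
        case False then show ?thesis using PP_upper[OF P] by blast
      next
        case True
        obtain j where j: "j < length P" "P!j = N" using True by (metis in_set_conv_nth)
        have "1 \<in> set P" using P unfolding PP_def by blast
        then obtain i where i: "i < length P" "P!i = 1" by (metis in_set_conv_nth)
        have "i \<noteq> j" using i j assms by auto
        then have "i < j \<or> j < i" by arith
        then show ?thesis using i j P unfolding HH_def GG_def by blast
      qed
    qed
    have "PP (N-1) m \<subseteq> PP N m" using PP_lower assms by auto
    moreover have "HH N m \<subseteq> PP N m" "GG N m \<subseteq> PP N m" unfolding HH_def GG_def by auto
    ultimately show "(PP (N-1) m \<union> HH N m) \<union> GG N m \<subseteq> PP N m" by blast
  qed
  have d1: "PP (N-1) m \<inter> HH N m = {}"
  proof (rule ccontr)
    assume "PP (N-1) m \<inter> HH N m \<noteq> {}"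
    then obtain P j where "P \<in> PP (N-1) m" "j < length P" "P!j = N" unfolding HH_def by blast
    then have "N \<in> set P" "set P \<subseteq> {1..N-1}" unfolding PP_def by (auto simp: in_set_conv_nth)
    then show False using assms by auto
  qed
  have d2: "(PP (N-1) m \<union> HH N m) \<inter> GG N m = {}"
  proof (rule ccontr)
    assume "(PP (N-1) m \<union> HH N m) \<inter> GG N m \<noteq> {}"
    then obtain P where P: "P \<in> PP (N-1) m \<union> HH N m" "P \<in> GG N m" by blast
    then obtain i j where ij: "j<i" "i<length P" "P!i = 1" "P!j = N" unfolding GG_def by blast
    have dP: "distinct P" using P(2) unfolding GG_def PP_def by auto
    show False
    proof (cases "P \<in> PP (N-1) m")
      case True
      have jl: "j < length P" using ij by simp
      have "N \<in> set P" using nth_mem[OF jl] ij by simp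
      moreover have "set P \<subseteq> {1..N-1}" using True unfolding PP_def by simp
      ultimately show False using assms by auto
    next
      case False
      then obtain i' j' where ij': "i'<j'" "j'<length P" "P!i' = 1" "P!j' = N" using P(1) unfolding HH_def by blast
      have "i = i'" using nth_eq_iff_index_eq[OF dP, of i i'] ij ij' by simp
      moreover have "j = j'" using nth_eq_iff_index_eq[OF dP, of j j'] ij ij' by simp
      ultimately show False using ij ij' by simp
    qed
  qed
  have f: "finite (PP (N-1) m)" "finite (HH N m)" "finite (GG N m)"
    using finite_PP unfolding HH_def GG_def by auto
  show ?thesis
    unfolding eq using card_Un_disjoint[OF _ _ d2] card_Un_disjoint[OF _ _ d1] f by simp
qed

lemma PP_I:
  assumes "length P = m" "distinct P" "set P \<subseteq> {1..N}" "1 \<in> set P" "good P"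
    "\<And>g. g \<in> {1..N} \<Longrightarrow> g \<notin> set P \<Longrightarrow> \<not> straddle P g"
  shows "P \<in> PP N m"
  unfolding PP_def mem_Collect_eq using assms by (intro conjI ballI impI) auto

lemma PP_D:
  assumes "P \<in> PP N m"
  shows "length P = m" "distinct P" "set P \<subseteq> {1..N}" "1 \<in> set P" "good P"
    "\<And>g. g \<in> {1..N} \<Longrightarrow> g \<notin> set P \<Longrightarrow> \<not> straddle P g"
  using assms unfolding PP_def mem_Collect_eq by (elim conjE; simp)+

lemma straddle_big: assumes "straddle P g" "set P \<subseteq> {1..N}" shows "g < N"
proof -
  obtain i j l where Q: "i<j" "j<l" "l<length P" "g < P!j" using assms(1) unfolding straddle_def by blast
  have "j < length P" using Q by simp
  then have "P!j \<in> {1..N}" using assms(2) nth_mem by blast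
  then show ?thesis using Q by simp
qed

lemma snoc_good_N:
  assumes "set Q \<subseteq> {1..N-1}" "good Q" shows "good (Q @ [N])"
proof -
  have "\<not> straddle Q N"
  proof
    assume "straddle Q N"
    then have "N < N - 1" using straddle_big assms(1) by blast
    then show False by simp
  qed
  then show ?thesis using good_snoc assms by blast
qed

lemma snocN:
  assumes "Q \<in> PP (N-1) (m-1)" "2 \<le> m"
  shows "Q @ [N] \<in> HH N m"
proof -
  note Q = PP_D[OF assms(1)]
  have NQ: "N \<notin> set Q"
  proof
    assume "N \<in> set Q"
    then have "N \<in> {1..N-1}" using Q(3) by blast
    then show False by auto
  qed
  have P: "Q @ [N] \<in> PP N m"
  proof (rule PP_I)
    show "length (Q @ [N]) = m" using Q(1) assms(2) by simp
    show "distinct (Q @ [N])" using Q(2) NQ by simp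
    show "set (Q @ [N]) \<subseteq> {1..N}"
    proof
      fix x assume x: "x \<in> set (Q @ [N])"
      have "1 \<in> {1..N-1}" using Q(3,4) by blast
      then have N1: "1 \<le> N" by simp
      show "x \<in> {1..N}"
      proof (cases "x = N")
        case True then show ?thesis using N1 by simp
      next
        case False
        then have "x \<in> {1..N-1}" using x Q(3) by auto
        then show ?thesis by auto
      qed
    qed
    show "1 \<in> set (Q @ [N])" using Q(4) by simp
    show "good (Q @ [N])" using snoc_good_N Q(3,5) by blast
    fix g assume g: "g \<in> {1..N}" "g \<notin> set (Q @ [N])"
    then have "g \<in> {1..N-1}" "g \<notin> set Q" by auto
    then have "\<not> straddle Q g" using Q(6) by blast
    then show "\<not> straddle (Q @ [N]) g" using straddle_snoc_big[of g N Q] g by simp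
  qed
  obtain i where i: "i < length Q" "Q!i = 1" using Q(4) by (metis in_set_conv_nth)
  have "i < length Q \<and> length Q < length (Q@[N]) \<and> (Q@[N])!i = 1 \<and> (Q@[N])!(length Q) = N"
    using i by (simp add: nth_append)
  then show ?thesis using P unfolding HH_def by blast
qed

lemma snocN_inv:
  assumes "P \<in> HH N m" "last P = N" "2 \<le> N"
  shows "butlast P \<in> PP (N-1) (m-1)" "P = butlast P @ [N]"
proof -
  have PP: "P \<in> PP N m" using assms(1) unfolding HH_def by blast
  note A = PP_D[OF PP]
  have ne: "P \<noteq> []" using A(4) by auto
  show eq: "P = butlast P @ [N]" using append_butlast_last_id[OF ne] assms(2) by simp
  define Q where "Q = butlast P"
  have Qt: "Q = take (length P - 1) P" unfolding Q_def by (simp add: butlast_conv_take)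
  have dQ: "distinct (Q @ [N])" using A(2) eq unfolding Q_def by simp
  have sQ: "set (Q @ [N]) \<subseteq> {1..N}" using A(3) eq unfolding Q_def by simp
  show "butlast P \<in> PP (N-1) (m-1)"
    unfolding Q_def[symmetric]
  proof (rule PP_I)
    show "length Q = m-1" using A(1) unfolding Q_def by simp
    show "distinct Q" using dQ by simp
    show "set Q \<subseteq> {1..N-1}"
    proof
      fix x assume "x \<in> set Q"
      then have "x \<in> {1..N}" "x \<noteq> N" using dQ sQ by auto
      then show "x \<in> {1..N-1}" by auto
    qed
    have "1 \<in> set (Q @ [N])" using A(4) eq unfolding Q_def by simp
    then show "1 \<in> set Q" using assms(3) by auto
    show "good Q" unfolding Qt using good_take A(5) by blast
    fix g assume g: "g \<in> {1..N-1}" "g \<notin> set Q"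
    then have "g \<in> {1..N}" "g \<notin> set P" using eq unfolding Q_def[symmetric] by auto
    then have "\<not> straddle P g" using A(6) by blast
    then show "\<not> straddle Q g" unfolding Qt using straddle_take by blast
  qed
qed


definition mg :: "nat \<Rightarrow> nat list \<Rightarrow> nat" where
  "mg N Q = Max ({1..N} - set Q)"

lemma mg_props:
  assumes "distinct Q" "set Q \<subseteq> {1..N}" "length Q < N"
  shows "mg N Q \<in> {1..N} - set Q" "\<And>g. g \<in> {1..N} - set Q \<Longrightarrow> g \<le> mg N Q"
proof -
  have "card (set Q) < card {1..N}" using assms(3) distinct_card[OF assms(1)] by simp
  then have ne: "{1..N} - set Q \<noteq> {}"
  proof -
    assume c: "card (set Q) < card {1..N}"
    show ?thesis
    proof
      assume "{1..N} - set Q = {}"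
      then have "{1..N} \<subseteq> set Q" by blast
      then have "card {1..N} \<le> card (set Q)" by (intro card_mono) simp_all
      then show False using c by simp
    qed
  qed
  have fin: "finite ({1..N} - set Q)" by simp
  show "mg N Q \<in> {1..N} - set Q" unfolding mg_def by (rule Max_in[OF fin ne])
  show "\<And>g. g \<in> {1..N} - set Q \<Longrightarrow> g \<le> mg N Q" unfolding mg_def by (rule Max_ge[OF fin])
qed

lemma HH_D:
  assumes "P \<in> HH N m"
  shows "P \<in> PP N m" "\<exists>i j. i<j \<and> j<length P \<and> P!i = 1 \<and> P!j = N"
  using assms by (simp_all add: HH_def)

lemma snocM:
  assumes "Q \<in> HH N (m-1)" "2 \<le> m" "m \<le> N"
  shows "Q @ [mg N Q] \<in> HH N m" "mg N Q \<noteq> N"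
proof -
  have QP: "Q \<in> PP N (m-1)" using HH_D[OF assms(1)] by blast
  note Q = PP_D[OF QP]
  obtain i j where ij: "i<j" "j<length Q" "Q!i = 1" "Q!j = N" using HH_D[OF assms(1)] by blast
  have NQ: "N \<in> set Q" using ij nth_mem by blast
  define w where "w = mg N Q"
  have w: "w \<in> {1..N} - set Q" "\<And>g. g \<in> {1..N} - set Q \<Longrightarrow> g \<le> w"
    using mg_props[OF Q(2) Q(3)] Q(1) assms unfolding w_def by auto
  show "mg N Q \<noteq> N" using w NQ unfolding w_def by auto
  have P: "Q @ [w] \<in> PP N m"
  proof (rule PP_I)
    show "length (Q @ [w]) = m" using Q(1) assms(2) by simp
    show "distinct (Q @ [w])" using Q(2) w by simp
    show "set (Q @ [w]) \<subseteq> {1..N}" using Q(3) w by auto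
    show "1 \<in> set (Q @ [w])" using Q(4) by simp
    have "\<not> straddle Q w" using Q(6) w by blast
    then show "good (Q @ [w])" using good_snoc Q(5) by blast
    fix g assume g: "g \<in> {1..N}" "g \<notin> set (Q @ [w])"
    then have "g \<le> w" using w by auto
    moreover have "\<not> straddle Q g" using Q(6) g by auto
    ultimately show "\<not> straddle (Q @ [w]) g" using straddle_snoc_big by blast
  qed
  have "i<j \<and> j<length (Q @ [w]) \<and> (Q @ [w])!i = 1 \<and> (Q @ [w])!j = N"
    using ij by (simp add: nth_append)
  then show "Q @ [mg N Q] \<in> HH N m" using P unfolding HH_def w_def by blast
qed

lemma snocM_inv:
  assumes "P \<in> HH N m" "last P \<noteq> N"
  shows "butlast P \<in> HH N (m-1)" "P = butlast P @ [mg N (butlast P)]"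
proof -
  have PP: "P \<in> PP N m" using HH_D[OF assms(1)] by blast
  note A = PP_D[OF PP]
  obtain i j where ij: "i<j" "j<length P" "P!i = 1" "P!j = N" using HH_D[OF assms(1)] by blast
  have ne: "P \<noteq> []" using A(4) by auto
  define Q where "Q = butlast P"
  define w where "w = last P"
  have eq: "P = Q @ [w]" using append_butlast_last_id[OF ne] unfolding Q_def w_def by simp
  have Qt: "Q = take (length P - 1) P" unfolding Q_def by (simp add: butlast_conv_take)
  have dQ: "distinct (Q @ [w])" using A(2) eq by simp
  have sQ: "set (Q @ [w]) \<subseteq> {1..N}" using A(3) eq by simp
  have jQ: "j < length Q"
  proof (rule ccontr)
    assume "\<not> j < length Q"
    then have "j = length Q" using ij eq by simp
    then have "P!j = w" using eq by simp
    then show False using ij assms(2) unfolding w_def by simp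
  qed
  have ijQ: "Q!i = 1" "Q!j = N" using ij jQ eq by (simp_all add: nth_append)
  have QP: "Q \<in> PP N (m-1)"
  proof (rule PP_I)
    show "length Q = m-1" using A(1) unfolding Q_def by simp
    show "distinct Q" using dQ by simp
    show "set Q \<subseteq> {1..N}" using sQ by simp
    show "1 \<in> set Q" using ijQ ij jQ by (metis nth_mem order.strict_trans)
    show "good Q" unfolding Qt using good_take A(5) by blast
    fix g assume g: "g \<in> {1..N}" "g \<notin> set Q"
    show "\<not> straddle Q g"
    proof (cases "g = w")
      case True
      have "good (Q @ [w])" using A(5) eq by simp
      then show ?thesis using good_snoc True by blast
    next
      case False
      then have "g \<notin> set P" using g eq by simp
      then have "\<not> straddle P g" using A(6) g by blast
      then show ?thesis unfolding Qt using straddle_take by blast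
    qed
  qed
  show "butlast P \<in> HH N (m-1)" using QP ijQ ij jQ unfolding HH_def Q_def[symmetric] by blast
  have wmax: "mg N Q = w"
    unfolding mg_def
  proof (rule Max_eqI)
    show "finite ({1..N} - set Q)" by simp
    have "w \<in> set (Q @ [w])" by simp
    then have "w \<in> {1..N}" using sQ by blast
    moreover have "w \<notin> set Q" using dQ by simp
    ultimately show "w \<in> {1..N} - set Q" by simp
    fix g assume g: "g \<in> {1..N} - set Q"
    show "g \<le> w"
    proof (rule ccontr)
      assume "\<not> g \<le> w"
      then have gw: "w < g" by simp
      have gP: "g \<notin> set P" using g gw eq by auto
      have "N \<in> set Q" using ijQ jQ nth_mem by metis
      then have gN: "g \<noteq> N" using g by auto
      have "g \<le> N" using g by simp
      then have "g < N" using gN by simp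
      have "straddle P g" unfolding straddle_def
      proof (intro exI conjI)
        show "i < j" by (fact ij(1))
        show "j < length P - 1" using jQ eq by simp
        show "length P - 1 < length P" using ne by simp
        have "w \<in> {1..N}" using sQ by simp
        then show "P ! i < g" using ij gw by simp
        show "P ! (length P - 1) < g" using gw ne unfolding w_def by (simp add: last_conv_nth)
        show "g < P ! j" using ij \<open>g < N\<close> by simp
      qed
      then show False using A(6) g gP by auto
    qed
  qed
  then show "P = butlast P @ [mg N (butlast P)]" unfolding Q_def[symmetric] using eq by simp
qed

lemma HH_rec:
  assumes "2 \<le> m" "m \<le> N"
  shows "card (HH N m) = card (PP (N-1) (m-1)) + card (HH N (m-1))"
proof -
  have N2: "2 \<le> N" using assms by simp
  define HL where "HL = {P \<in> HH N m. last P = N}"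
  define HM where "HM = {P \<in> HH N m. last P \<noteq> N}"
  have split: "HH N m = HL \<union> HM" "HL \<inter> HM = {}" unfolding HL_def HM_def by auto
  have fin: "finite (HH N m)" using finite_PP[of N m] unfolding HH_def by simp
  have HL: "HL = (\<lambda>Q. Q @ [N]) ` PP (N-1) (m-1)"
  proof
    show "HL \<subseteq> (\<lambda>Q. Q @ [N]) ` PP (N-1) (m-1)"
    proof
      fix P assume "P \<in> HL"
      then have "P \<in> HH N m" "last P = N" unfolding HL_def by auto
      then show "P \<in> (\<lambda>Q. Q @ [N]) ` PP (N-1) (m-1)" using snocN_inv[OF _ _ N2] by blast
    qed
    show "(\<lambda>Q. Q @ [N]) ` PP (N-1) (m-1) \<subseteq> HL"
      using snocN[OF _ assms(1)] unfolding HL_def by auto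
  qed
  have HM: "HM = (\<lambda>Q. Q @ [mg N Q]) ` HH N (m-1)"
  proof
    show "HM \<subseteq> (\<lambda>Q. Q @ [mg N Q]) ` HH N (m-1)"
    proof
      fix P assume "P \<in> HM"
      then have "P \<in> HH N m" "last P \<noteq> N" unfolding HM_def by auto
      then show "P \<in> (\<lambda>Q. Q @ [mg N Q]) ` HH N (m-1)" using snocM_inv by blast
    qed
    show "(\<lambda>Q. Q @ [mg N Q]) ` HH N (m-1) \<subseteq> HM"
      using snocM[OF _ assms] unfolding HM_def by auto
  qed
  have i1: "inj_on (\<lambda>Q. Q @ [N]) (PP (N-1) (m-1))" by (rule inj_onI) simp
  have i2: "inj_on (\<lambda>Q. Q @ [mg N Q]) (HH N (m-1))" by (rule inj_onI) simp
  have "card (HH N m) = card HL + card HM"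
    using split fin card_Un_disjoint[of HL HM] by (metis finite_Un)
  also have "card HL = card (PP (N-1) (m-1))" unfolding HL using card_image[OF i1] .
  also have "card HM = card (HH N (m-1))" unfolding HM using card_image[OF i2] .
  finally show ?thesis .
qed

lemma good_shift: "good (map (\<lambda>x. x + c) xs) \<longleftrightarrow> good xs"
proof -
  define M where "M = map (\<lambda>x. x + c) xs"
  have H: "(M!i < M!q \<and> M!l < M!q \<and> M!q < M!j) \<longleftrightarrow> (xs!i < xs!q \<and> xs!l < xs!q \<and> xs!q < xs!j)"
    if "i<j" "j<l" "l<q" "q<length xs" for i j l q
    using that unfolding M_def by simp
  have L: "length M = length xs" unfolding M_def by simp
  show ?thesis unfolding M_def[symmetric] good_def L using H by blast
qed

lemma good_drop:
  assumes "good xs" shows "good (drop t xs)"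
  unfolding good_def
proof
  assume "\<exists>i j l q. i<j \<and> j<l \<and> l<q \<and> q<length (drop t xs) \<and> (drop t xs)!i < (drop t xs)!q \<and>
       (drop t xs)!l < (drop t xs)!q \<and> (drop t xs)!q < (drop t xs)!j"
  then obtain i j l q where Q: "i<j" "j<l" "l<q" "q<length (drop t xs)" "(drop t xs)!i < (drop t xs)!q"
       "(drop t xs)!l < (drop t xs)!q" "(drop t xs)!q < (drop t xs)!j" by blast
  have "t + q < length xs" using Q(4) by simp
  moreover have "xs!(t+i) < xs!(t+q)" "xs!(t+l) < xs!(t+q)" "xs!(t+q) < xs!(t+j)" using Q(4-7) Q(1-3)
    by (simp_all add: add.commute)
  moreover have "t+i < t+j" "t+j < t+l" "t+l < t+q" using Q(1-3) by simp_all
  ultimately show False using assms unfolding good_def by blast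
qed

lemma straddle_drop:
  assumes "straddle (drop t xs) g" shows "straddle xs g"
proof -
  obtain i j l where Q: "i<j" "j<l" "l<length (drop t xs)" "(drop t xs)!i < g"
     "(drop t xs)!l < g" "g < (drop t xs)!j"
    using assms unfolding straddle_def by blast
  have "t + l < length xs" using Q(3) by simp
  moreover have "xs!(t+i) < g" "xs!(t+l) < g" "g < xs!(t+j)" using Q by (simp_all add: add.commute)
  moreover have "t+i < t+j" "t+j < t+l" using Q(1-2) by simp_all
  ultimately show ?thesis unfolding straddle_def by blast
qed

lemma good_block:
  assumes "good A" "good B" "\<And>x y. x \<in> set A \<Longrightarrow> y \<in> set B \<Longrightarrow> y < x"
  shows "good (A @ B)"
  unfolding good_def
proof
  assume "\<exists>i j l q. i<j \<and> j<l \<and> l<q \<and> q<length (A@B) \<and> (A@B)!i < (A@B)!q \<and>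
       (A@B)!l < (A@B)!q \<and> (A@B)!q < (A@B)!j"
  then obtain i j l q where Q: "i<j" "j<l" "l<q" "q<length (A@B)" "(A@B)!i < (A@B)!q"
       "(A@B)!l < (A@B)!q" "(A@B)!q < (A@B)!j" by blast
  show False
  proof (cases "q < length A")
    case True
    then have "A!i < A!q" "A!l < A!q" "A!q < A!j" using Q by (simp_all add: nth_append)
    then show False using assms(1) Q(1-3) True unfolding good_def by blast
  next
    case False
    define q' where "q' = q - length A"
    have q': "q' < length B" "(A@B)!q = B!q'" using False Q(4) unfolding q'_def by (simp_all add: nth_append)
    have iA: "\<not> i < length A"
    proof
      assume iA: "i < length A"
      then have "(A@B)!i \<in> set A" by (simp add: nth_append)
      moreover have "(A@B)!q \<in> set B" using q' by simp
      ultimately show False using assms(3) Q(5) by fastforce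
    qed
    define i' where "i' = i - length A"
    define j' where "j' = j - length A"
    define l' where "l' = l - length A"
    have "(A@B)!i = B!i'" "(A@B)!j = B!j'" "(A@B)!l = B!l'"
      using iA Q(1-3) unfolding i'_def j'_def l'_def by (simp_all add: nth_append)
    moreover have "i' < j'" "j' < l'" "l' < q'" using iA Q(1-3) unfolding i'_def j'_def l'_def q'_def by simp_all
    ultimately show False using assms(2) q' Q(5-7) unfolding good_def by metis
  qed
qed

lemma straddle_block:
  assumes "straddle (A @ B) g" "\<And>x. x \<in> set A \<Longrightarrow> g \<le> x"
  shows "straddle B g"
proof -
  obtain i j l where Q: "i<j" "j<l" "l<length (A@B)" "(A@B)!i < g" "(A@B)!l < g" "g < (A@B)!j"
    using assms(1) unfolding straddle_def by blast
  have iA: "\<not> i < length A"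
  proof
    assume "i < length A"
    then have "(A@B)!i \<in> set A" by (simp add: nth_append)
    then show False using assms(2) Q(4) by fastforce
  qed
  define i' where "i' = i - length A"
  define j' where "j' = j - length A"
  define l' where "l' = l - length A"
  have "(A@B)!i = B!i'" "(A@B)!j = B!j'" "(A@B)!l = B!l'"
    using iA Q(1-2) unfolding i'_def j'_def l'_def by (simp_all add: nth_append)
  moreover have "i' < j'" "j' < l'" "l' < length B" using iA Q(1-3) unfolding i'_def j'_def l'_def by simp_all
  ultimately show ?thesis using Q(4-6) unfolding straddle_def by metis
qed

lemma dc_lemma:
  assumes "finite S" "\<And>a b. b \<in> S \<Longrightarrow> a < b \<Longrightarrow> a \<in> S"
  shows "S = {..<card S}"
proof
  show "S \<subseteq> {..<card S}"
  proof
    fix a assume a: "a \<in> S"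
    have "{..a} \<subseteq> S" using a assms(2) by (auto simp: le_less)
    then have "card {..a} \<le> card S" using assms(1) by (rule card_mono[rotated])
    then show "a \<in> {..<card S}" by simp
  qed
  show "{..<card S} \<subseteq> S"
  proof
    fix a assume a: "a \<in> {..<card S}"
    show "a \<in> S"
    proof (rule ccontr)
      assume "a \<notin> S"
      have "S \<subseteq> {..<a}"
      proof
        fix b assume b: "b \<in> S"
        have "b \<noteq> a" using b \<open>a \<notin> S\<close> by auto
        moreover have "\<not> a < b" using assms(2)[OF b] \<open>a \<notin> S\<close> by auto
        ultimately show "b \<in> {..<a}" by simp
      qed
      then have "card S \<le> a" using card_mono[of "{..<a}" S] by simp
      then show False using a by simp
    qed
  qed
qed

definition BB :: "nat \<Rightarrow> nat list set" where
  "BB t = {T \<in> PP t t. t = 1 \<or> (\<exists>i j. i<j \<and> j<length T \<and> T!i = 1 \<and> T!j = t)}"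

definition shf :: "nat \<Rightarrow> nat list \<Rightarrow> nat list" where
  "shf c T = map (\<lambda>x. x + c) T"

definition SS :: "nat \<Rightarrow> nat \<Rightarrow> (nat \<times> nat list \<times> nat list) set" where
  "SS N m = (SIGMA t:{1..m-1}. BB t \<times> PP (N-t) (m-t))"

definition psi :: "nat \<Rightarrow> nat \<times> nat list \<times> nat list \<Rightarrow> nat list" where
  "psi N x = shf (N - fst x) (fst (snd x)) @ snd (snd x)"

lemma PP_full:
  assumes "T \<in> PP t t" shows "set T = {1..t}"
proof -
  note A = PP_D[OF assms]
  have "card (set T) = card {1..t}" using distinct_card[OF A(2)] A(1) by simp
  then show ?thesis using card_subset_eq[OF _ A(3)] by simp
qed

lemma BB_D:
  assumes "T \<in> BB t"
  shows "T \<in> PP t t" "t = 1 \<or> (\<exists>i j. i<j \<and> j<length T \<and> T!i = 1 \<and> T!j = t)"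
  using assms by (simp_all add: BB_def)

lemma psi_in_GG:
  assumes t: "t \<in> {1..m-1}" and T: "T \<in> BB t" and R: "R \<in> PP (N-t) (m-t)"
  shows "shf (N-t) T @ R \<in> GG N m"
proof -
  define c where "c = N - t"
  have TP: "T \<in> PP t t" using BB_D[OF T] by simp
  note TA = PP_D[OF TP]
  note RA = PP_D[OF R[folded c_def]]
  have sT: "set T = {1..t}" by (rule PP_full[OF TP])
  have "1 \<in> {1..c}" using RA(3,4) by blast
  then have c1: "1 \<le> c" by simp
  have tN: "t + c = N" using c1 unfolding c_def by simp
  have sS: "set (shf c T) = {c+1..N}"
  proof -
    have "set (shf c T) = (\<lambda>x. x + c) ` {1..t}" unfolding shf_def using sT by simp
    also have "\<dots> = {c+1..N}" using tN by (auto simp: image_iff intro!: bexI[where x="_ - c"])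
    finally show ?thesis .
  qed
  have lS: "length (shf c T) = t" unfolding shf_def using TA(1) by simp
  have big: "\<And>x y. x \<in> set (shf c T) \<Longrightarrow> y \<in> set R \<Longrightarrow> y < x"
  proof -
    fix x y assume "x \<in> set (shf c T)" "y \<in> set R"
    then have "c + 1 \<le> x" "y \<le> c" using sS RA(3) by auto
    then show "y < x" by simp
  qed
  have PPm: "shf c T @ R \<in> PP N m"
  proof (rule PP_I)
    have tm: "t < m" using t by auto
    show "length (shf c T @ R) = m" using lS RA(1) tm by simp
    show "distinct (shf c T @ R)"
    proof -
      have "distinct (shf c T)" unfolding shf_def using TA(2) by (simp add: distinct_map inj_on_def)
      moreover have "set (shf c T) \<inter> set R = {}" using big by force
      ultimately show ?thesis using RA(2) by simp
    qed
    show "set (shf c T @ R) \<subseteq> {1..N}"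
    proof
      fix x assume "x \<in> set (shf c T @ R)"
      then have "x \<in> {c+1..N} \<or> x \<in> {1..c}" using sS RA(3) by auto
      then show "x \<in> {1..N}" using tN by auto
    qed
    show "1 \<in> set (shf c T @ R)" using RA(4) by simp
    show "good (shf c T @ R)"
      using good_block[OF _ RA(5) big] good_shift TA(5) unfolding shf_def by blast
    fix g assume g: "g \<in> {1..N}" "g \<notin> set (shf c T @ R)"
    then have "g \<notin> {c+1..N}" using sS by simp
    then have gc: "g \<le> c" using g by simp
    then have "g \<in> {1..c}" "g \<notin> set R" using g by auto
    then have nR: "\<not> straddle R g" using RA(6) by blast
    show "\<not> straddle (shf c T @ R) g"
    proof
      assume "straddle (shf c T @ R) g"
      moreover have "\<And>x. x \<in> set (shf c T) \<Longrightarrow> g \<le> x" using sS gc by auto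
      ultimately have "straddle R g" by (rule straddle_block)
      then show False using nR by simp
    qed
  qed
  have "t \<in> set T" using sT t by simp
  then obtain j where j: "j < length T" "T!j = t" by (metis in_set_conv_nth)
  obtain i1 where i1: "i1 < length R" "R!i1 = 1" using RA(4) by (metis in_set_conv_nth)
  have "j < t + i1 \<and> t + i1 < length (shf c T @ R) \<and> (shf c T @ R)!(t+i1) = 1 \<and> (shf c T @ R)!j = N"
    using j i1 lS TA(1) tN unfolding shf_def by (simp add: nth_append)
  then show ?thesis using PPm unfolding GG_def c_def by blast
qed

lemma psi_le:
  assumes a: "(t, T, R) \<in> SS N m" and b: "(t', T', R') \<in> SS N m"
    and eq: "shf (N-t) T @ R = shf (N-t') T' @ R'"
  shows "t \<le> t'"
proof (cases "t = 1")
  case True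
  then show ?thesis using b unfolding SS_def by auto
next
  case False
  have t: "t \<in> {1..m-1}" and T: "T \<in> BB t" and R: "R \<in> PP (N-t) (m-t)" using a unfolding SS_def by auto
  have t': "t' \<in> {1..m-1}" and T': "T' \<in> BB t'" and R': "R' \<in> PP (N-t') (m-t')" using b unfolding SS_def by auto
  obtain i j where ij: "i<j" "j<length T" "T!i = 1" "T!j = t" using BB_D(2)[OF T] False by blast
  note TA = PP_D[OF BB_D(1)[OF T]]
  note TA' = PP_D[OF BB_D(1)[OF T']]
  note RA' = PP_D[OF R']
  note RA = PP_D[OF R]
  have "1 \<in> {1..N-t}" using RA(3,4) by blast
  then have tN: "t < N" by simp
  have "1 \<in> {1..N-t'}" using RA'(3,4) by blast
  then have tN': "t' < N" by simp
  define P where "P = shf (N-t) T @ R"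
  have P': "P = shf (N-t') T' @ R'" using eq unfolding P_def by simp
  have Pj: "P!j = N" using ij TA(1) tN unfolding P_def shf_def by (simp add: nth_append)
  have Pi: "P!i = 1 + (N - t)" using ij TA(1) unfolding P_def shf_def by (simp add: nth_append)
  have jt': "j < t'"
  proof (rule ccontr)
    assume "\<not> j < t'"
    then have jt'': "t' \<le> j" by simp
    have tm: "t < m" using t by auto
    have lP: "length P = m" using TA(1) RA(1) tm unfolding P_def shf_def by simp
    have "length P = t' + length R'" unfolding P' shf_def using TA'(1) by simp
    then have jR: "j - t' < length R'" using ij TA(1) t lP jt'' by (simp add: P_def)
    have "P!j = R'!(j - t')" unfolding P' shf_def using TA'(1) jt'' by (simp add: nth_append)
    moreover have "R'!(j-t') \<in> {1..N-t'}" using RA'(3) jR nth_mem by blast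
    ultimately have "P!j \<le> N - t'" by simp
    then show False using Pj tN' t' by auto
  qed
  have "P!i = T'!i + (N - t')" unfolding P' shf_def using TA'(1) ij jt' by (simp add: nth_append)
  moreover have "T'!i \<in> {1..t'}" using PP_full[OF BB_D(1)[OF T']] TA'(1) ij jt' nth_mem by (metis less_trans)
  ultimately have "1 + (N - t') \<le> 1 + (N - t)" using Pi by simp
  then show ?thesis using tN tN' by simp
qed

lemma psi_inj: "inj_on (psi N) (SS N m)"
proof (rule inj_onI)
  fix x y assume x: "x \<in> SS N m" and y: "y \<in> SS N m" and e: "psi N x = psi N y"
  obtain t T R where xe: "x = (t, T, R)" by (cases x) auto
  obtain t' T' R' where ye: "y = (t', T', R')" by (cases y) auto
  have e': "shf (N-t) T @ R = shf (N-t') T' @ R'" using e unfolding xe ye psi_def by simp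
  have "t \<le> t'" using psi_le x y e' unfolding xe ye by blast
  moreover have "t' \<le> t" using psi_le y x e' unfolding xe ye by (metis)
  ultimately have tt: "t = t'" by simp
  have lT: "length T = t" "length T' = t'"
    using x y PP_D(1)[OF BB_D(1)] unfolding xe ye SS_def by auto
  have "length (shf (N-t) T) = length (shf (N-t') T')" using lT tt unfolding shf_def by simp
  then have "shf (N-t) T = shf (N-t') T'" "R = R'" using e' by simp_all
  then have "T = T'" using tt unfolding shf_def by (simp add: map_eq_conv)
  then show "x = y" using tt \<open>R = R'\<close> unfolding xe ye by simp
qed

lemma GG_D:
  assumes "P \<in> GG N m"
  shows "P \<in> PP N m" "\<exists>i j. j<i \<and> i<length P \<and> P!i = 1 \<and> P!j = N"
  using assms by (simp_all add: GG_def)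

lemma GG_in_image:
  assumes PG: "P \<in> GG N m"
  shows "P \<in> psi N ` SS N m"
proof -
  have PP: "P \<in> PP N m" using GG_D[OF PG] by simp
  note A = PP_D[OF PP]
  obtain i1 j where ij: "j<i1" "i1<length P" "P!i1 = 1" "P!j = N" using GG_D(2)[OF PG] by blast
  have jl: "j < length P" using ij by simp
  have vals: "\<And>a. a < length P \<Longrightarrow> P!a \<in> {1..N}" using A(3) nth_mem by blast
  have dist: "\<And>a b. a < length P \<Longrightarrow> b < length P \<Longrightarrow> P!a = P!b \<Longrightarrow> a = b"
    using nth_eq_iff_index_eq[OF A(2)] by blast
  define V where "V = (\<lambda>a. P!a) ` {..j}"
  have finV: "finite V" "V \<noteq> {}" unfolding V_def by auto
  define y0 where "y0 = Min V"
  have "y0 \<in> V" unfolding y0_def by (rule Min_in[OF finV])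
  then obtain a0 where a0: "a0 \<le> j" "P!a0 = y0" unfolding V_def by auto
  have ymin: "\<And>a. a \<le> j \<Longrightarrow> y0 \<le> P!a"
    unfolding y0_def V_def using finV by (intro Min_le) auto
  have yN: "y0 \<le> N" using ymin[of j] ij by simp
  have a0l: "a0 < length P" using a0 jl by simp
  have y2: "2 \<le> y0"
  proof -
    have "P!a0 \<noteq> 1"
    proof
      assume "P!a0 = 1"
      then have "a0 = i1" using dist[OF a0l ij(2)] ij by simp
      then show False using a0 ij by simp
    qed
    moreover have "1 \<le> P!a0" using vals[OF a0l] by simp
    ultimately show ?thesis using a0 by simp
  qed
  have S2: "g \<in> set P" if g: "y0 \<le> g" "g \<le> N" for g
  proof (rule ccontr)
    assume gP: "g \<notin> set P"
    have "g \<noteq> y0" using gP a0 a0l nth_mem by metis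
    have "g \<noteq> N" using gP ij jl nth_mem by metis
    have a0j: "a0 < j"
    proof -
      have "a0 \<noteq> j" using a0 ij \<open>g \<noteq> y0\<close> \<open>g \<noteq> N\<close> g by auto
      then show ?thesis using a0 by simp
    qed
    have "straddle P g" unfolding straddle_def
      using a0j ij a0 g \<open>g \<noteq> y0\<close> \<open>g \<noteq> N\<close> y2
      by (intro exI[of _ a0] exI[of _ j] exI[of _ i1]) auto
    moreover have "g \<in> {1..N}" using g y2 by simp
    ultimately show False using A(6) gP by blast
  qed
  have S1: "P!b < y0" if ab: "a < b" "b < length P" "P!a < y0" for a b
  proof (rule ccontr)
    assume "\<not> P!b < y0"
    then have by0: "y0 \<le> P!b" by simp
    have al: "a < length P" using ab by simp
    have ja: "j < a" using ymin[of a] ab by (meson leI less_le_not_le)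
    have "P!b \<noteq> y0"
    proof
      assume "P!b = y0"
      then have "b = a0" using dist[OF ab(2) a0l] a0 by simp
      then show False using a0 ja ab by simp
    qed
    then have yb: "y0 < P!b" using by0 by simp
    have "P!b \<noteq> N"
    proof
      assume "P!b = N"
      then have "b = j" using dist[OF ab(2) jl] ij by simp
      then show False using ja ab by simp
    qed
    then have bN: "P!b < N" using vals[OF ab(2)] by simp
    have a0j: "a0 < j"
    proof -
      have "a0 \<noteq> j" using a0 ij yb bN by auto
      then show ?thesis using a0 by simp
    qed
    have "a0 < j \<and> j < a \<and> a < b \<and> b < length P \<and> P!a0 < P!b \<and> P!a < P!b \<and> P!b < P!j"
      using a0j ja ab a0 yb bN ij by simp
    then show False using A(5) unfolding good_def by blast
  qed
  define Sidx where "Sidx = {a. a < length P \<and> y0 \<le> P!a}"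
  define t where "t = N + 1 - y0"
  have finS: "finite Sidx" unfolding Sidx_def by simp
  have cardS: "card Sidx = t"
  proof -
    have "bij_betw (\<lambda>a. P!a) Sidx {y0..N}"
    proof (rule bij_betw_imageI)
      show "inj_on (\<lambda>a. P!a) Sidx" unfolding Sidx_def using dist by (auto intro: inj_onI)
      show "(\<lambda>a. P!a) ` Sidx = {y0..N}"
      proof
        show "(\<lambda>a. P!a) ` Sidx \<subseteq> {y0..N}" unfolding Sidx_def using vals by auto
        show "{y0..N} \<subseteq> (\<lambda>a. P!a) ` Sidx"
        proof
          fix g assume "g \<in> {y0..N}"
          then have "g \<in> set P" "y0 \<le> g" using S2 by auto
          then obtain a where "a < length P" "P!a = g" by (metis in_set_conv_nth)
          then show "g \<in> (\<lambda>a. P!a) ` Sidx" unfolding Sidx_def using \<open>y0 \<le> g\<close> by force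
        qed
      qed
    qed
    then show ?thesis unfolding t_def by (simp add: bij_betw_same_card)
  qed
  have dcS: "Sidx = {..<t}"
  proof -
    have "Sidx = {..<card Sidx}"
    proof (rule dc_lemma[OF finS])
      fix a b assume b: "b \<in> Sidx" and ab: "a < b"
      then have bl: "b < length P" "y0 \<le> P!b" unfolding Sidx_def by auto
      have "\<not> P!a < y0" using S1[OF ab bl(1)] bl(2) by linarith
      then show "a \<in> Sidx" unfolding Sidx_def using bl ab by simp
    qed
    then show ?thesis using cardS by simp
  qed
  have idx: "\<And>a. a < length P \<Longrightarrow> (y0 \<le> P!a \<longleftrightarrow> a < t)"
    using dcS unfolding Sidx_def by blast
  have tl: "t \<le> length P"
  proof -
    have "Sidx \<subseteq> {..<length P}" unfolding Sidx_def by auto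
    then show ?thesis using dcS by auto
  qed
  have t1: "1 \<le> t" unfolding t_def using yN by simp
  have i1t: "t \<le> i1"
  proof -
    have "\<not> y0 \<le> P!i1" using ij y2 by simp
    then show ?thesis using idx[OF ij(2)] by simp
  qed
  have lenP: "length P = m" by (fact A(1))
  define c where "c = N - t"
  have cy: "c = y0 - 1" unfolding c_def t_def using yN y2 by simp
  define T where "T = map (\<lambda>x. x - c) (take t P)"
  define R where "R = drop t P"
  have takeP: "\<And>a. a < t \<Longrightarrow> take t P ! a = P ! a" by simp
  have tvals: "\<And>x. x \<in> set (take t P) \<Longrightarrow> y0 \<le> x \<and> x \<le> N"
  proof -
    fix x assume "x \<in> set (take t P)"
    then obtain a where a: "a < length (take t P)" "take t P ! a = x" by (metis in_set_conv_nth)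
    then have "a < t" "a < length P" by auto
    then show "y0 \<le> x \<and> x \<le> N" using idx vals a by auto
  qed
  have rvals: "\<And>x. x \<in> set R \<Longrightarrow> 1 \<le> x \<and> x \<le> c"
  proof -
    fix x assume "x \<in> set R"
    then obtain a where a: "a < length R" "R ! a = x" by (metis in_set_conv_nth)
    then have "t + a < length P" "P!(t+a) = x" unfolding R_def using tl by auto
    moreover have "\<not> (t + a < t)" by simp
    ultimately show "1 \<le> x \<and> x \<le> c" using idx vals cy by fastforce
  qed
  have shfT: "shf c T = take t P"
    unfolding shf_def T_def map_map o_def
  proof (intro map_idI)
    fix x assume "x \<in> set (take t P)"
    then have "y0 \<le> x" using tvals by blast
    then show "x - c + c = x" using cy y2 by simp
  qed
  have Peq: "P = shf c T @ R" unfolding shfT R_def by simp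
  have lT: "length T = t" unfolding T_def using tl by simp
  have tm: "t \<in> {1..m-1}" using t1 i1t ij lenP by auto
  have TP: "T \<in> PP t t"
  proof (rule PP_I)
    show "length T = t" by (fact lT)
    show dT: "distinct T" unfolding T_def
    proof (rule distinct_map[THEN iffD2], intro conjI)
      show "distinct (take t P)" using A(2) by simp
      show "inj_on (\<lambda>x. x - c) (set (take t P))" using tvals cy by (intro inj_onI) fastforce
    qed
    show sT: "set T \<subseteq> {1..t}"
    proof
      fix x assume "x \<in> set T"
      then obtain z where "z \<in> set (take t P)" "x = z - c" unfolding T_def by auto
      then show "x \<in> {1..t}" using tvals[of z] cy t_def yN y2 by auto
    qed
    have a0t: "a0 < t" using idx[OF a0l] a0 by simp
    then have "T ! a0 = 1" unfolding T_def using a0 cy tl y2 by simp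
    then show "1 \<in> set T" using a0t lT nth_mem by metis
    have "good (take t P)" using good_take A(5) by blast
    then show "good T" using shfT good_shift unfolding shf_def by metis
    have "set T = {1..t}"
      using card_subset_eq[OF _ sT] distinct_card[OF dT] lT by simp
    then show "\<And>g. g \<in> {1..t} \<Longrightarrow> g \<notin> set T \<Longrightarrow> \<not> straddle T g" by simp
  qed
  have TB: "T \<in> BB t"
  proof -
    have "t = 1 \<or> (\<exists>i j. i<j \<and> j<length T \<and> T!i = 1 \<and> T!j = t)"
    proof (cases "y0 = N")
      case True then show ?thesis unfolding t_def by simp
    next
      case False
      have a0j: "a0 < j"
      proof -
        have "a0 \<noteq> j" using a0 ij False by auto
        then show ?thesis using a0 by simp
      qed
      have jt: "j < t" using idx[OF jl] ij yN by simp
      have a0t: "a0 < t" using a0j jt by simp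
      have "T!a0 = P!a0 - c" unfolding T_def using a0t tl by simp
      then have Ta0: "T!a0 = 1" using a0 cy y2 by simp
      have Tj: "T!j = P!j - c" unfolding T_def using jt tl by simp
      have "t \<le> N" unfolding t_def using y2 by simp
      then have "N - c = t" unfolding c_def by simp
      then have "T!j = t" using ij(4) Tj by simp
      have "j < length T" using jt lT by simp
      then show ?thesis using Ta0 \<open>T!j = t\<close> a0j by (intro disjI2 exI[of _ a0] exI[of _ j]) simp
    qed
    then show ?thesis using TP unfolding BB_def mem_Collect_eq by (intro conjI)
  qed
  have RP: "R \<in> PP (N-t) (m-t)"
  proof (rule PP_I)
    show "length R = m - t" unfolding R_def using lenP by simp
    show "distinct R" unfolding R_def using A(2) by simp
    show "set R \<subseteq> {1..N-t}" using rvals c_def by auto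
    have "R ! (i1 - t) = 1" unfolding R_def using i1t ij by simp
    moreover have "i1 - t < length R" unfolding R_def using i1t ij by simp
    ultimately show "1 \<in> set R" by (metis nth_mem)
    show "good R" unfolding R_def using good_drop A(5) by blast
    fix g assume g: "g \<in> {1..N-t}" "g \<notin> set R"
    have "g \<notin> set P"
    proof
      assume "g \<in> set P"
      then obtain a where a: "a < length P" "P!a = g" by (metis in_set_conv_nth)
      have "\<not> y0 \<le> g" using g cy c_def by auto
      then have "t \<le> a" using idx[OF a(1)] a by simp
      then have "R ! (a - t) = g" "a - t < length R" unfolding R_def using a by auto
      then show False using g(2) nth_mem by metis
    qed
    moreover have "g \<in> {1..N}" using g by auto
    ultimately have "\<not> straddle P g" using A(6) by blast
    then show "\<not> straddle R g" unfolding R_def using straddle_drop by blast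
  qed
  have "(t, T, R) \<in> SS N m" unfolding SS_def using tm TB RP by simp
  moreover have "psi N (t, T, R) = P" unfolding psi_def using Peq c_def by simp
  ultimately show ?thesis by force
qed

lemma arith_main:
  fixes F H b :: "nat \<Rightarrow> nat \<Rightarrow> nat" and bb :: "nat \<Rightarrow> nat"
  defines "Gs \<equiv> \<lambda>N m. \<Sum>t\<in>{1..m-1}. bb t * F (N-t) (m-t)"
  assumes F0: "\<And>N m. N < m \<Longrightarrow> F N m = 0"
    and F1: "\<And>N. 1 \<le> N \<Longrightarrow> F N 1 = 1"
    and split: "\<And>N m. 2 \<le> N \<Longrightarrow> F N m = F (N-1) m + H N m + Gs N m"
    and hrec: "\<And>N m. 2 \<le> m \<Longrightarrow> m \<le> N \<Longrightarrow> H N m = F (N-1) (m-1) + H N (m-1)"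
    and h1: "\<And>N. 1 \<le> N \<Longrightarrow> H N 1 = 0"
    and b1: "bb 1 = 1" and bH: "\<And>t. 2 \<le> t \<Longrightarrow> bb t = H t t"
  shows "\<And>N m. 2 \<le> m \<Longrightarrow> m \<le> N \<Longrightarrow> F N m = F N (m-1) + F (N-1) m + F (N-1) (m-1)"
proof -
  have G1: "Gs N 1 = 0" for N unfolding Gs_def by simp
  have Gsplit: "Gs N m = bb (m-1) * F (N-(m-1)) 1 + (\<Sum>t\<in>{1..m-2}. bb t * F (N-t) (m-t))"
    if "2 \<le> m" for N m
  proof -
    have e: "m - 1 = Suc (m-2)" using that by simp
    have "Gs N m = (\<Sum>t\<in>{1..Suc (m-2)}. bb t * F (N-t) (m-t))" unfolding Gs_def e by simp
    also have "\<dots> = (\<Sum>t\<in>{1..m-2}. bb t * F (N-t) (m-t)) + bb (m-1) * F (N-(m-1)) (m-(m-1))"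
      using e by (simp add: sum.cl_ivl_Suc)
    also have "m - (m-1) = 1" using that by simp
    finally show ?thesis by simp
  qed
  have Gm1: "Gs N (m-1) = (\<Sum>t\<in>{1..m-2}. bb t * F (N-t) (m-1-t))" for N m
    unfolding Gs_def by (simp add: diff_commute numeral_2_eq_2)
  have RfromC: "F N m = F N (m-1) + F (N-1) m + F (N-1) (m-1)"
    if C: "\<And>m'. 1 \<le> m' \<Longrightarrow> m' \<le> N \<Longrightarrow> Gs N m' = H N m'" and m: "2 \<le> m" "m \<le> N" for N m
  proof -
    have N2: "2 \<le> N" using m by simp
    have "F N m = F (N-1) m + H N m + Gs N m" using split[OF N2] .
    also have "Gs N m = H N m" using C m by simp
    also have "H N m = F (N-1) (m-1) + H N (m-1)" using hrec m by simp
    also have "F N (m-1) = F (N-1) (m-1) + H N (m-1) + Gs N (m-1)" using split[OF N2] .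
    moreover have "Gs N (m-1) = H N (m-1)" using C m by simp
    ultimately show ?thesis by simp
  qed
  have C: "\<forall>m. 1 \<le> m \<longrightarrow> m \<le> N \<longrightarrow> Gs N m = H N m" for N
  proof (induction N rule: less_induct)
    case (less N)
    have R: "F N' m' = F N' (m'-1) + F (N'-1) m' + F (N'-1) (m'-1)"
      if "N' < N" "2 \<le> m'" "m' \<le> N'" for N' m'
      using RfromC[of N' m'] less.IH[OF that(1)] that(2,3) by blast
    show ?case
    proof (intro allI impI)
      fix m assume "1 \<le> m" "m \<le> N"
      then show "Gs N m = H N m"
      proof (induction m rule: nat_induct_at_least)
        case base
        then show ?case using G1 h1 by simp
      next
        case (Suc k)
        define m where "m = Suc k"
        have m2: "2 \<le> m" "m \<le> N" using Suc unfolding m_def by auto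
        have IHm: "Gs N (m-1) = H N (m-1)" using Suc unfolding m_def by simp
        have N2: "2 \<le> N" using m2 by simp
        have inner: "(\<Sum>t\<in>{1..m-2}. bb t * F (N-t) (m-t)) =
            (\<Sum>t\<in>{1..m-2}. bb t * F (N-t) (m-1-t)) + (\<Sum>t\<in>{1..m-2}. bb t * F (N-1-t) (m-t))
            + (\<Sum>t\<in>{1..m-2}. bb t * F (N-1-t) (m-1-t))"
        proof -
          have "bb t * F (N-t) (m-t) = bb t * F (N-t) (m-1-t) + bb t * F (N-1-t) (m-t) + bb t * F (N-1-t) (m-1-t)"
            if t: "t \<in> {1..m-2}" for t
          proof -
            have "F (N-t) (m-t) = F (N-t) (m-t-1) + F (N-t-1) (m-t) + F (N-t-1) (m-t-1)"
              using R[of "N-t" "m-t"] t m2 by auto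
            moreover have "m-t-1 = m-1-t" "N-t-1 = N-1-t" by simp_all
            ultimately show ?thesis by (simp add: algebra_simps)
          qed
          then show ?thesis by (simp add: sum.distrib)
        qed
        have GN1m: "Gs (N-1) m = bb (m-1) * F (N-m) 1 + (\<Sum>t\<in>{1..m-2}. bb t * F (N-1-t) (m-t))"
          using Gsplit[OF m2(1), of "N-1"] m2 by (simp add: diff_commute)
        have GN1m1: "Gs (N-1) (m-1) = (\<Sum>t\<in>{1..m-2}. bb t * F (N-1-t) (m-1-t))"
          using Gm1[of "N-1" m] .
        have main: "Gs N m = bb (m-1) + Gs N (m-1) + (\<Sum>t\<in>{1..m-2}. bb t * F (N-1-t) (m-t)) + Gs (N-1) (m-1)"
        proof -
          have f1: "F (N-(m-1)) 1 = 1" using F1 m2 by simp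
          have "Gs N m = bb (m-1) * F (N-(m-1)) 1 + (\<Sum>t\<in>{1..m-2}. bb t * F (N-t) (m-t))"
            using Gsplit[OF m2(1), of N] .
          also have "\<dots> = bb (m-1) + ((\<Sum>t\<in>{1..m-2}. bb t * F (N-t) (m-1-t)) + (\<Sum>t\<in>{1..m-2}. bb t * F (N-1-t) (m-t))
            + (\<Sum>t\<in>{1..m-2}. bb t * F (N-1-t) (m-1-t)))" unfolding f1 inner by simp
          also have "\<dots> = bb (m-1) + Gs N (m-1) + (\<Sum>t\<in>{1..m-2}. bb t * F (N-1-t) (m-t)) + Gs (N-1) (m-1)"
            unfolding Gm1[of N m] GN1m1 by simp
          finally show ?thesis .
        qed
        have key: "Gs N m = F (N-1) (m-1) + Gs N (m-1)"
        proof (cases "m < N")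
          case True
          have m1N: "m \<le> N-1" using True by simp
          have CN1: "Gs (N-1) m' = H (N-1) m'" if "1 \<le> m'" "m' \<le> N-1" for m'
            using less.IH[of "N-1"] N2 that by auto
          have "Gs (N-1) m = bb (m-1) + (\<Sum>t\<in>{1..m-2}. bb t * F (N-1-t) (m-t))"
            using GN1m F1[of "N-m"] True by simp
          moreover have "Gs (N-1) m = H (N-1) m" using CN1 m1N m2 by simp
          moreover have "H (N-1) m = F (N-2) (m-1) + H (N-1) (m-1)" using hrec[OF m2(1) m1N] by (simp add: diff_diff_add numeral_2_eq_2)
          moreover have "Gs (N-1) (m-1) = H (N-1) (m-1)" using CN1 m1N m2 by simp
          moreover have "F (N-1) (m-1) = F (N-2) (m-1) + H (N-1) (m-1) + Gs (N-1) (m-1)"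
            using split[of "N-1" "m-1"] m2 m1N by (simp add: diff_diff_add numeral_2_eq_2)
          ultimately show ?thesis using main by simp
        next
          case False
          then have mN: "m = N" using m2 by simp
          have z: "(\<Sum>t\<in>{1..m-2}. bb t * F (N-1-t) (m-t)) = 0"
            using F0 mN by (intro sum.neutral) auto
          have "bb (m-1) + Gs (N-1) (m-1) = F (N-1) (m-1)"
          proof (cases "N = 2")
            case True
            then show ?thesis using mN b1 G1 F1 by simp
          next
            case False
            then have N3: "2 \<le> N-1" "2 \<le> m-1" using N2 mN by auto
            have "bb (m-1) = H (N-1) (N-1)" using bH[OF N3(2)] mN by simp
            moreover have "F (N-1) (N-1) = F (N-1-1) (N-1) + H (N-1) (N-1) + Gs (N-1) (N-1)"
              using split[OF N3(1)] .
            moreover have "F (N-1-1) (N-1) = 0" using F0 N2 by simp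
            ultimately show ?thesis using mN by simp
          qed
          then show ?thesis using main[unfolded z] by simp
        qed
        have "H N m = F (N-1) (m-1) + H N (m-1)" using hrec[OF m2] .
        then show ?case using key IHm unfolding m_def by simp
      qed
    qed
  qed
  fix N m :: nat assume "2 \<le> m" "m \<le> N"
  then show "F N m = F N (m-1) + F (N-1) m + F (N-1) (m-1)"
    using RfromC[of N m] C[of N] by blast
qed

lemma GG_card:
  "card (GG N m) = (\<Sum>t\<in>{1..m-1}. card (BB t) * card (PP (N-t) (m-t)))"
proof -
  have img: "psi N ` SS N m = GG N m"
  proof
    show "psi N ` SS N m \<subseteq> GG N m"
    proof
      fix P assume "P \<in> psi N ` SS N m"
      then obtain t T R where x: "(t, T, R) \<in> SS N m" "P = psi N (t, T, R)" by auto
      then have "t \<in> {1..m-1}" "T \<in> BB t" "R \<in> PP (N-t) (m-t)" unfolding SS_def by auto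
      then have "shf (N-t) T @ R \<in> GG N m" by (rule psi_in_GG)
      then show "P \<in> GG N m" using x(2) unfolding psi_def by simp
    qed
    show "GG N m \<subseteq> psi N ` SS N m" using GG_in_image by blast
  qed
  have finB: "finite (BB t)" for t
    using finite_PP[of t t] unfolding BB_def by simp
  have "card (GG N m) = card (SS N m)" using card_image[OF psi_inj] img by metis
  also have "\<dots> = (\<Sum>t\<in>{1..m-1}. card (BB t \<times> PP (N-t) (m-t)))"
    unfolding SS_def by (rule card_SigmaI) (auto simp: finB finite_PP)
  also have "\<dots> = (\<Sum>t\<in>{1..m-1}. card (BB t) * card (PP (N-t) (m-t)))"
    by (simp add: card_cartesian_product)
  finally show ?thesis .
qed

lemma BB_one: "card (BB 1) = 1"
proof -
  have "BB 1 = {[1]}" unfolding BB_def using PP_one[of 1] by auto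
  then show ?thesis by simp
qed

lemma BB_HH: "2 \<le> t \<Longrightarrow> card (BB t) = card (HH t t)"
  unfolding BB_def HH_def by simp

lemma HH_one: "1 \<le> N \<Longrightarrow> card (HH N 1) = 0"
proof -
  assume N: "1 \<le> N"
  have "HH N 1 = {}"
  proof (rule ccontr)
    assume "HH N 1 \<noteq> {}"
    then obtain P where P: "P \<in> HH N 1" by blast
    then have "P \<in> PP N 1" "\<exists>i j. i<j \<and> j<length P \<and> P!i = 1 \<and> P!j = N" unfolding HH_def by auto
    then have "P = [1]" "\<exists>i j. i<j \<and> j<length P" using PP_one[OF N] by auto
    then show False by auto
  qed
  then show ?thesis by simp
qed

lemma F_rec:
  assumes "2 \<le> m" "m \<le> N"
  shows "card (PP N m) = card (PP N (m-1)) + card (PP (N-1) m) + card (PP (N-1) (m-1))"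
proof -
  let ?F = "\<lambda>N m. card (PP N m)"
  let ?H = "\<lambda>N m. card (HH N m)"
  let ?b = "\<lambda>t. card (BB t)"
  have "?F N m = ?F N (m-1) + ?F (N-1) m + ?F (N-1) (m-1)"
  proof (rule arith_main[where H="?H" and bb="?b"])
    show "\<And>N m. N < m \<Longrightarrow> ?F N m = 0" using PP_empty by simp
    show "\<And>N. 1 \<le> N \<Longrightarrow> ?F N 1 = 1" using PP_one by simp
    show "\<And>N m. 2 \<le> N \<Longrightarrow> ?F N m = ?F (N-1) m + ?H N m + (\<Sum>t\<in>{1..m-1}. ?b t * ?F (N-t) (m-t))"
      using PP_split GG_card by simp
    show "\<And>N m. 2 \<le> m \<Longrightarrow> m \<le> N \<Longrightarrow> ?H N m = ?F (N-1) (m-1) + ?H N (m-1)"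
      using HH_rec by simp
    show "\<And>N. 1 \<le> N \<Longrightarrow> ?H N 1 = 0" using HH_one by simp
    show "?b 1 = 1" by (rule BB_one)
    show "\<And>t. 2 \<le> t \<Longrightarrow> ?b t = ?H t t" using BB_HH by simp
  qed (use assms in auto)
  then show ?thesis .
qed

theorem proposition4p1:
  shows "(\<forall>n\<ge>2. a_num n 2 = 1) \<and>
         (\<forall>n\<ge>3. a_num n n = a_num n (n - 1) + a_num (n - 1) (n - 1)) \<and>
         (\<forall>n k. 3 \<le> k \<and> k < n \<longrightarrow>
            a_num n k = a_num n (k - 1) + a_num (n - 1) k + a_num (n - 1) (k - 1))"
proof (intro conjI allI impI)
  fix n :: nat assume n: "2 \<le> n"
  have "a_num n 2 = card (PP (n-1) 1)" using a_num_PP[of 2 n] n by simp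
  then show "a_num n 2 = 1" using PP_one[of "n-1"] n by simp
next
  fix n :: nat assume n: "3 \<le> n"
  have e1: "a_num n n = card (PP (n-1) (n-1))" using a_num_PP[of n n] n by simp
  have e2: "a_num n (n-1) = card (PP (n-1) (n-2))" using a_num_PP[of "n-1" n] n by (simp add: numeral_2_eq_2)
  have e3: "a_num (n-1) (n-1) = card (PP (n-2) (n-2))" using a_num_PP[of "n-1" "n-1"] n by (simp add: numeral_2_eq_2)
  have r: "card (PP (n-1) (n-1)) = card (PP (n-1) (n-1-1)) + card (PP (n-1-1) (n-1)) + card (PP (n-1-1) (n-1-1))"
    using F_rec[of "n-1" "n-1"] n by simp
  have z: "card (PP (n-1-1) (n-1)) = 0" using PP_empty[of "n-1-1" "n-1"] n by simp
  show "a_num n n = a_num n (n - 1) + a_num (n - 1) (n - 1)"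
    using r z e1 e2 e3 by (simp add: numeral_2_eq_2)
next
  fix n k :: nat assume nk0: "3 \<le> k \<and> k < n"
  then have nk: "3 \<le> k" "k < n" by auto
  have e1: "a_num n k = card (PP (n-1) (k-1))" using a_num_PP[of k n] nk by simp
  have e2: "a_num n (k-1) = card (PP (n-1) (k-2))" using a_num_PP[of "k-1" n] nk by (simp add: numeral_2_eq_2)
  have e3: "a_num (n-1) k = card (PP (n-2) (k-1))" using a_num_PP[of k "n-1"] nk by (simp add: numeral_2_eq_2)
  have e4: "a_num (n-1) (k-1) = card (PP (n-2) (k-2))" using a_num_PP[of "k-1" "n-1"] nk by (simp add: numeral_2_eq_2)
  have r: "card (PP (n-1) (k-1)) = card (PP (n-1) (k-1-1)) + card (PP (n-1-1) (k-1)) + card (PP (n-1-1) (k-1-1))"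
    using F_rec[of "k-1" "n-1"] nk by simp
  show "a_num n k = a_num n (k - 1) + a_num (n - 1) k + a_num (n - 1) (k - 1)"
    using r e1 e2 e3 e4 by (simp add: numeral_2_eq_2)
qed

end
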